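(* Consider the clock protocol (defined in the context) run by a population of $n$ agents with a fixed constant drip probability $p\in(0,1]$. Fix a minute index $i\ge 0$. With very high probability, for all times $t$ of the execution: if $n^{-0.45}\le c_{\ge i}(t)\le 0.1$, then $$c_{\ge i+1}(t)\le 0.9\,p\,c_{\ge i}(t)^2+d_{\ge i+1}(t).$$
   Context: Clock protocol: $n$ agents, each with an integer field $\mathtt{minute}$, initially $0$. At each step an ordered pair of distinct agents is chosen uniformly at random to interact; parallel time $t$ corresponds to $tn$ interactions. Transitions: (drip) if both agents have $\mathtt{minute}=i$, then with probability $p$ one of them moves to $\mathtt{minute}=i+1$ (i.e. $i,i\to i,i+1$); (epidemic) if the agents have minutes $j>k$, the agent with minute $k$ sets its minute to $j$ (i.e. $j,k\to j,j$). For a minute $i$ and time $t$, $c_{\ge i}(t)$ is the fraction of agents with $\mathtt{minute}\ge i$ at time $t$. The set of early drip agents $D_{\ge i+1}(t)$ consists of the agents that, at some time $\le t$, moved above minute $i$ via a drip reaction occurring at a time $s$ with $c_{\ge i}(s)<n^{-0.45}$, together with agents that were brought above minute $i$ (at a time $\le t$) via an epidemic reaction with another early drip agent; $d_{\ge i+1}(t)=|D_{\ge i+1}(t)|/n$. "With very high probability" means with probability $1-n^{-\omega(1)}$ as $n\to\infty$ ($p$ fixed); the execution is considered over polynomially many (in $n$) minutes. *)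

theory Defs
  imports "HOL-Probability.Probability"
begin

text \<open>Agents are 0..n-1. A configuration is a pair (m, D): m a is the minute of agent a,
  D a says whether agent a belongs to the early-drip set D_{>= i+1} (for the fixed minute i).\<close>

type_synonym config = "(nat \<Rightarrow> nat) \<times> (nat \<Rightarrow> bool)"

definition agent_pairs :: "nat \<Rightarrow> (nat \<times> nat) set" where
  "agent_pairs n = {(u, v). u < n \<and> v < n \<and> u \<noteq> v}"

definition c_ge :: "nat \<Rightarrow> (nat \<Rightarrow> nat) \<Rightarrow> nat \<Rightarrow> real" where
  "c_ge n m i = real (card {a. a < n \<and> i \<le> m a}) / real n"

definition d_frac :: "nat \<Rightarrow> (nat \<Rightarrow> bool) \<Rightarrow> real" where
  "d_frac n D = real (card {a. a < n \<and> D a}) / real n"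

definition clock_step :: "nat \<Rightarrow> real \<Rightarrow> nat \<Rightarrow> config \<Rightarrow> config pmf" where
  "clock_step n p i s = (case s of (m, D) \<Rightarrow>
     do { (u, v) \<leftarrow> pmf_of_set (agent_pairs n);
          if m u = m v then
            do { b \<leftarrow> bernoulli_pmf p;
                 return_pmf (if b then
                    (m(v := Suc (m v)),
                     if m v = i \<and> c_ge n m i < real n powr (-0.45) then D(v := True) else D)
                  else (m, D)) }
          else if m v < m u then
            return_pmf (m(v := m u),
                        if m v \<le> i \<and> i < m u \<and> D u then D(v := True) else D)
          else
            return_pmf (m(u := m v),
                        if m u \<le> i \<and> i < m v \<and> D v then D(u := True) else D) })"

definition clock_init :: config where
  "clock_init = ((\<lambda>_. 0), (\<lambda>_. False))"

text \<open>Distribution of the trajectory of the first k interactions (list of k+1 configurations,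
  entry t is the configuration after t interactions).\<close>
fun clock_run :: "nat \<Rightarrow> real \<Rightarrow> nat \<Rightarrow> nat \<Rightarrow> config list pmf" where
  "clock_run n p i 0 = return_pmf [clock_init]"
| "clock_run n p i (Suc k) =
     do { xs \<leftarrow> clock_run n p i k;
          s' \<leftarrow> clock_step n p i (last xs);
          return_pmf (xs @ [s']) }"

definition clock_bad :: "nat \<Rightarrow> real \<Rightarrow> nat \<Rightarrow> config \<Rightarrow> bool" where
  "clock_bad n p i s = (case s of (m, D) \<Rightarrow>
     real n powr (-0.45) \<le> c_ge n m i \<and> c_ge n m i \<le> 0.1 \<and>
     \<not> (c_ge n m (Suc i) \<le> 0.9 * p * (c_ge n m i)\<^sup>2 + d_frac n D))"

end

theory Submission
  imports Defs
begin


definition Yr :: "nat \<Rightarrow> (nat \<Rightarrow> nat) \<Rightarrow> nat \<Rightarrow> real" where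
  "Yr n m i = real (card {a. a < n \<and> i \<le> m a})"
definition Xr :: "nat \<Rightarrow> (nat \<Rightarrow> nat) \<Rightarrow> (nat \<Rightarrow> bool) \<Rightarrow> nat \<Rightarrow> real" where
  "Xr n m D i = real (card {a. a < n \<and> i < m a \<and> \<not> D a})"

lemma c_ge_Yr: "c_ge n m i = Yr n m i / real n"
  by (simp add: c_ge_def Yr_def)

lemma card_update:
  fixes n l :: nat
  assumes "l < n" "\<And>a. a \<noteq> l \<Longrightarrow> Q a = P a"
  shows "real (card {a. a < n \<and> Q a}) = real (card {a. a < n \<and> P a}) - of_bool (P l) + of_bool (Q l)"
proof -
  have fin: "finite {a. a < n \<and> P a}" "finite {a. a < n \<and> Q a}" by (auto intro: finite_subset[where B="{..<n}"])
  have e: "{a. a < n \<and> Q a} - {l} = {a. a < n \<and> P a} - {l}" using assms by auto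
  have g: "real (card (S - {l})) = real (card S) - of_bool (R l)" if "S = {a. a < n \<and> R a}" for S R
  proof (cases "R l")
    case True
    then have "l \<in> S" using that assms(1) by auto
    have fS: "finite S" using that by simp
    have "Suc (card (S - {l})) = card S" by (rule card_Suc_Diff1[OF fS \<open>l \<in> S\<close>])
    then have "real (card S) = real (card (S - {l})) + 1" by (simp flip: of_nat_Suc)
    then show ?thesis using True by simp
  next
    case False
    then have "S - {l} = S" using that by auto
    then show ?thesis using False by simp
  qed
  have "real (card ({a. a < n \<and> Q a} - {l})) = real (card {a. a < n \<and> Q a}) - of_bool (Q l)"
    by (rule g) simp
  moreover have "real (card ({a. a < n \<and> P a} - {l})) = real (card {a. a < n \<and> P a}) - of_bool (P l)"
    by (rule g) simp
  ultimately show ?thesis using e by simp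
qed

lemma drip_Y:
  assumes "v < n"
  shows "Yr n (m(v := Suc (m v))) i = Yr n m i + of_bool (Suc (m v) = i)"
  unfolding Yr_def
  apply (subst card_update[OF assms, where P="\<lambda>a. i \<le> m a"])
  subgoal by simp
  by (cases "Suc (m v) = i") (auto)

lemma drip_X:
  assumes "v < n"
  shows "Xr n (m(v := Suc (m v))) (if m v = i \<and> c < th then D(v := True) else D) i
         = Xr n m D i + of_bool (m v = i \<and> \<not> c < th \<and> \<not> D v)"
  unfolding Xr_def
  apply (subst card_update[OF assms, where P="\<lambda>a. i < m a \<and> \<not> D a"])
  subgoal by simp
  by (cases "m v = i"; cases "c < th"; cases "D v"; cases "i < m v"; simp)

lemma epi_Y:
  assumes "l < n" "m l < m w"
  shows "Yr n (m(l := m w)) i = Yr n m i + of_bool (m l < i \<and> i \<le> m w)"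
  unfolding Yr_def
  apply (subst card_update[OF assms(1), where P="\<lambda>a. i \<le> m a"])
  subgoal by simp
  using assms(2) by (cases "m l < i"; cases "i \<le> m w"; simp)

lemma epi_X:
  assumes "l < n" "m l < m w"
  shows "Xr n (m(l := m w)) (if m l \<le> i \<and> i < m w \<and> D w then D(l := True) else D) i
         = Xr n m D i + of_bool (m l \<le> i \<and> i < m w \<and> \<not> D w \<and> \<not> D l)"
  unfolding Xr_def
  apply (subst card_update[OF assms(1), where P="\<lambda>a. i < m a \<and> \<not> D a"])
  subgoal by simp
  using assms(2) by (cases "m l \<le> i"; cases "i < m w"; cases "D w"; cases "D l"; simp)

lemma phi_step:
  fixes X Y d e w a l n :: real
  assumes d: "d = 0 \<or> d = 1" and e: "e = 0 \<or> e = 1" and Y: "0 \<le> Y" and n: "0 < n"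
    and a: "0 \<le> a" and l: "0 \<le> l" and dw: "d \<le> w" and w: "0 \<le> w"
  shows "exp (l * ((X + d) - a * (Y + e)^2 / n))
         \<le> exp (l * (X - a * Y^2 / n)) * (1 + (exp l - 1) * w - (1 - exp (- (l * (2 * a * Y / n)))) * e)"
proof -
  define E where "E = exp (l * (X - a * Y^2 / n))"
  define q where "q = exp (- (l * (2 * a * Y / n)))"
  have E0: "0 < E" unfolding E_def by simp
  have el: "1 \<le> exp l" using l by simp
  have q1: "q \<le> 1" unfolding q_def using Y n a l by (simp add: zero_le_mult_iff)
  have q0: "0 < q" unfolding q_def by simp
  have split: "l * ((X + d) - a * (Y + e)^2 / n) = l * (X - a * Y^2 / n) + (l * d - l * a * (2 * Y * e + e^2) / n)"
    using n by (simp add: power2_eq_square field_simps)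
  have "exp (l * ((X + d) - a * (Y + e)^2 / n)) = E * exp (l * d - l * a * (2 * Y * e + e^2) / n)"
    unfolding E_def split exp_add by simp
  also have "exp (l * d - l * a * (2 * Y * e + e^2) / n) \<le> 1 + (exp l - 1) * w - (1 - q) * e"
  proof (cases "e = 0")
    case True
    then show ?thesis
    proof (cases "d = 0")
      case True
      then show ?thesis using \<open>e = 0\<close> el w by simp
    next
      case False
      then have "d = 1" using d by simp
      then have "w \<ge> 1" using dw by simp
      then have "(exp l - 1) * 1 \<le> (exp l - 1) * w" using el by (intro mult_left_mono) auto
      then show ?thesis using \<open>e = 0\<close> \<open>d = 1\<close> by simp
    qed
  next
    case False
    then have e1: "e = 1" using e by simp
    have "l * d - l * a * (2 * Y * e + e^2) / n \<le> l * d - l * (2 * a * Y / n)"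
      using e1 l a n by (simp add: field_simps)
    then have "exp (l * d - l * a * (2 * Y * e + e^2) / n) \<le> exp (l * d - l * (2 * a * Y / n))" by simp
    also have "\<dots> = exp (l * d) * q" unfolding q_def by (simp add: exp_diff exp_minus field_simps)
    also have "\<dots> \<le> 1 + (exp l - 1) * w - (1 - q) * e"
    proof (cases "d = 0")
      case True
      then show ?thesis using e1 el w by simp
    next
      case False
      then have "d = 1" using d by simp
      then have "w \<ge> 1" using dw by simp
      then have "(exp l - 1) * 1 \<le> (exp l - 1) * w" using el by (intro mult_left_mono) auto
      moreover have "0 \<le> (exp l - 1) * (1 - q)" using el q1 by simp
      ultimately show ?thesis using e1 \<open>d = 1\<close> by (simp add: algebra_simps)
    qed
    finally show ?thesis .
  qed
  then have "E * exp (l * d - l * a * (2 * Y * e + e^2) / n) \<le> E * (1 + (exp l - 1) * w - (1 - q) * e)"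
    using E0 by (intro mult_left_mono) auto
  finally show ?thesis unfolding E_def q_def .
qed

lemma key_ineq:
  fixes p n Y X SW SC :: real
  assumes p: "0 < p" "p \<le> 1" and n: "0 < n" and Y: "0 \<le> Y" "Y \<le> n / 10"
    and X: "X \<le> (9/10 * p) * Y^2 / n" and SW: "SW \<le> p * Y^2 + 2 * X * n"
    and SC: "SC = 2 * Y * (n - Y)"
  shows "(exp (1/10) - 1) * SW \<le> (1 - exp (- (1/10 * (2 * (9/10 * p) * Y / n)))) * SC"
proof -
  define x where "x = 1/10 * (2 * (9/10 * p) * Y / n)"
  have x0: "0 \<le> x" unfolding x_def using p n Y by simp
  have "Y / n \<le> 1/10" using Y n by (simp add: field_simps)
  moreover have "0 \<le> Y / n" using Y n by simp
  ultimately have "p * (Y / n) \<le> 1 * (1/10)" using p by (intro mult_mono) auto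
  moreover have "x = 9/50 * (p * (Y / n))" unfolding x_def by simp
  moreover have "9/50 * (p * (Y / n)) \<le> 9/50 * (1 * (1/10::real))"
    using calculation(1) by (rule mult_left_mono) simp
  ultimately have x1: "x \<le> 9/500" by simp
  have al: "exp (1/10::real) - 1 \<le> 11/100" using exp_bound[of "1/10::real"] by (simp add: power2_eq_square)
  have a0: "0 \<le> exp (1/10::real) - 1" by simp
  have "X * n \<le> (9/10 * p) * Y^2" using X n by (simp add: field_simps)
  then have SW': "SW \<le> 28/10 * p * Y^2" using SW by simp
  have L: "(exp (1/10) - 1) * SW \<le> 11/100 * (28/10 * p * Y^2)"
  proof -
    have "(exp (1/10) - 1) * SW \<le> (exp (1/10) - 1) * (28/10 * p * Y^2)" using SW' a0 by (intro mult_left_mono) auto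
    also have "\<dots> \<le> 11/100 * (28/10 * p * Y^2)" using al p by (intro mult_right_mono) auto
    finally show ?thesis .
  qed
  have ex: "1 + x \<le> exp x" by simp
  have "exp (- x) \<le> 1 / (1 + x)" using ex x0 by (simp add: exp_minus field_simps)
  then have b: "x / (1 + x) \<le> 1 - exp (- x)" using x0 by (simp add: field_simps)
  have SC0: "0 \<le> SC" using SC Y n by simp
  have "x / (1 + x) \<ge> x / (1 + 9/500)" using x0 x1 by (intro divide_left_mono) auto
  then have "x / (1 + 9/500) \<le> 1 - exp (- x)" using b by linarith
  then have "(x / (1 + 9/500)) * SC \<le> (1 - exp (- x)) * SC" using SC0 by (rule mult_right_mono)
  moreover have "11/100 * (28/10 * p * Y^2) \<le> (x / (1 + 9/500)) * SC"
  proof -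
    have "(x / (1 + 9/500)) * SC = (9/25 * p / (1 + 9/500)) * (Y^2 * ((n - Y) / n))"
      unfolding x_def SC using n by (simp add: field_simps power2_eq_square)
    moreover have "(n - Y) / n \<ge> 9/10" using Y n by (simp add: field_simps)
    moreover have "(9/25 * p / (1 + 9/500)) * (Y^2 * (9/10)) \<le> (9/25 * p / (1 + 9/500)) * (Y^2 * ((n - Y) / n))"
      using p \<open>(n - Y) / n \<ge> 9/10\<close> by (intro mult_left_mono) auto
    ultimately have "(x / (1 + 9/500)) * SC \<ge> (9/25 * p / (1 + 9/500)) * (Y^2 * (9/10))"
      by linarith
    moreover have "11/100 * (28/10 * p * Y^2) \<le> (9/25 * p / (1 + 9/500)) * (Y^2 * (9/10))"
      using p by (simp add: field_simps)
    ultimately show ?thesis by linarith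
  qed
  ultimately show ?thesis using L unfolding x_def by linarith
qed




definition inner :: "nat \<Rightarrow> real \<Rightarrow> nat \<Rightarrow> (nat \<Rightarrow> nat) \<Rightarrow> (nat \<Rightarrow> bool) \<Rightarrow> nat \<Rightarrow> nat \<Rightarrow> config pmf" where
  "inner n p i m D u v = (if m u = m v then
            do { b \<leftarrow> bernoulli_pmf p;
                 return_pmf (if b then
                    (m(v := Suc (m v)),
                     if m v = i \<and> c_ge n m i < real n powr (-0.45) then D(v := True) else D)
                  else (m, D)) }
          else if m v < m u then
            return_pmf (m(v := m u),
                        if m v \<le> i \<and> i < m u \<and> D u then D(v := True) else D)
          else
            return_pmf (m(u := m v),
                        if m u \<le> i \<and> i < m v \<and> D v then D(u := True) else D))"

lemma step_eq: "clock_step n p i (m, D) = pmf_of_set (agent_pairs n) \<bind> (\<lambda>(u, v). inner n p i m D u v)"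
  unfolding clock_step_def inner_def by simp

definition Phi :: "nat \<Rightarrow> real \<Rightarrow> nat \<Rightarrow> config \<Rightarrow> real" where
  "Phi n p i s = (case s of (m, D) \<Rightarrow> exp (1/10 * (Xr n m D i - (9/10 * p) * (Yr n m i)^2 / real n)))"

definition FF :: "nat \<Rightarrow> real \<Rightarrow> nat \<Rightarrow> config \<Rightarrow> real" where
  "FF n p i s = (case s of (m, D) \<Rightarrow> if 1/10 < c_ge n m i then 0 else
      exp (1/10 * (Xr n m D i - (9/10 * p) * (max (Yr n m i) (real n powr (-0.45) * real n))^2 / real n)))"

definition Zpos :: "nat \<Rightarrow> real \<Rightarrow> nat \<Rightarrow> config \<Rightarrow> bool" where
  "Zpos n p i s = (case s of (m, D) \<Rightarrow> real n powr (-0.45) \<le> c_ge n m i \<and> c_ge n m i \<le> 1/10 \<and>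
      (9/10 * p) * (Yr n m i)^2 / real n < Xr n m D i)"

definition Inv :: "nat \<Rightarrow> nat \<Rightarrow> config \<Rightarrow> bool" where
  "Inv n i s = (case s of (m, D) \<Rightarrow> (c_ge n m i < real n powr (-0.45) \<longrightarrow> Xr n m D i = 0))"

lemma Yr_nonneg: "0 \<le> Yr n m i" by (simp add: Yr_def)
lemma Xr_nonneg: "0 \<le> Xr n m D i" by (simp add: Xr_def)

lemma FF_nonneg: "0 \<le> FF n p i s" by (auto simp: FF_def split: prod.splits)

lemma exp_sub_mono: "(A::real) \<le> B \<Longrightarrow> exp (1/10 * (X - B)) \<le> exp (1/10 * (X - A))"
  by simp

lemma FF_le_Phi:
  assumes "0 < n" "0 \<le> p"
  shows "FF n p i s \<le> Phi n p i s"
proof -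
  obtain m D where s: "s = (m, D)" by fastforce
  have "Yr n m i ^ 2 \<le> (max (Yr n m i) (real n powr (-0.45) * real n))^2"
    using Yr_nonneg by (intro power_mono) auto
  then have "(9/10 * p) * (Yr n m i)^2 / real n \<le> (9/10 * p) * (max (Yr n m i) (real n powr (-0.45) * real n))^2 / real n"
    using assms by (intro divide_right_mono mult_left_mono) auto
  then have e: "exp (1/10 * (Xr n m D i - (9/10 * p) * (max (Yr n m i) (real n powr (-0.45) * real n))^2 / real n))
     \<le> exp (1/10 * (Xr n m D i - (9/10 * p) * (Yr n m i)^2 / real n))"
    by (rule exp_sub_mono)
  have F: "FF n p i s = (if 1/10 < c_ge n m i then 0 else exp (1/10 * (Xr n m D i - (9/10 * p) * (max (Yr n m i) (real n powr (-0.45) * real n))^2 / real n)))"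
    unfolding s FF_def prod.case by (rule refl)
  have P: "Phi n p i s = exp (1/10 * (Xr n m D i - (9/10 * p) * (Yr n m i)^2 / real n))"
    unfolding s Phi_def prod.case by (rule refl)
  show ?thesis
  proof (cases "1/10 < c_ge n m i")
    case False
    show ?thesis unfolding F P if_not_P[OF False] by (rule e)
  qed (simp add: F P)
qed

lemma FF_eq_Phi:
  assumes "0 < n" "real n powr (-0.45) \<le> c_ge n m i" "c_ge n m i \<le> 1/10"
  shows "FF n p i (m, D) = Phi n p i (m, D)"
proof -
  have "real n powr (-0.45) * real n \<le> Yr n m i" using assms by (simp add: c_ge_Yr field_simps)
  then show ?thesis using assms unfolding FF_def Phi_def by (simp add: max_def)
qed

lemma pairsD: "(u, v) \<in> agent_pairs n \<Longrightarrow> u < n \<and> v < n \<and> u \<noteq> v"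
  by (simp add: agent_pairs_def)

lemma inner_support:
  assumes "s' \<in> set_pmf (inner n p i m D u v)"
  shows "(m u = m v \<and> (s' = (m(v := Suc (m v)), if m v = i \<and> c_ge n m i < real n powr (-0.45) then D(v := True) else D) \<or> s' = (m, D)))
       \<or> (m v < m u \<and> s' = (m(v := m u), if m v \<le> i \<and> i < m u \<and> D u then D(v := True) else D))
       \<or> (m u < m v \<and> s' = (m(u := m v), if m u \<le> i \<and> i < m v \<and> D v then D(u := True) else D))"
  using assms unfolding inner_def by (auto split: if_splits)

lemma Xr_zero_D: "Xr n m D i = 0 \<Longrightarrow> w < n \<Longrightarrow> i < m w \<Longrightarrow> D w"
  unfolding Xr_def by (auto simp: card_eq_0_iff)

lemma outcome_facts:
  assumes "(u, v) \<in> agent_pairs n" "(m', D') \<in> set_pmf (inner n p i m D u v)"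
  shows "Yr n m i \<le> Yr n m' i"
    and "c_ge n m i < real n powr (-0.45) \<Longrightarrow> Xr n m D i = 0 \<Longrightarrow> Xr n m' D' i = 0"
proof -
  have uv: "u < n" "v < n" "u \<noteq> v" using pairsD[OF assms(1)] by auto
  note sup = inner_support[OF assms(2)]
  show "Yr n m i \<le> Yr n m' i"
    using sup drip_Y[OF uv(2), of m i] epi_Y[OF uv(2), of m u i] epi_Y[OF uv(1), of m v i]
    by auto
  assume c: "c_ge n m i < real n powr (-0.45)" and X: "Xr n m D i = 0"
  show "Xr n m' D' i = 0"
    using sup drip_X[OF uv(2), of m i "c_ge n m i" "real n powr (-0.45)" D]
      epi_X[OF uv(2), of m u i D] epi_X[OF uv(1), of m v i D] c X
      Xr_zero_D[OF X uv(1)] Xr_zero_D[OF X uv(2)]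
    by auto
qed

lemma inner_support_step:
  assumes "s' \<in> set_pmf (clock_step n p i (m, D))" "2 \<le> n"
  obtains u v where "(u, v) \<in> agent_pairs n" "s' \<in> set_pmf (inner n p i m D u v)"
proof -
  have "(0, 1) \<in> agent_pairs n" using assms(2) by (simp add: agent_pairs_def)
  then have ne: "agent_pairs n \<noteq> {}" by blast
  have fin: "finite (agent_pairs n)" unfolding agent_pairs_def
    by (rule finite_subset[of _ "{..<n} \<times> {..<n}"]) auto
  show ?thesis using assms(1) that unfolding step_eq using ne fin by auto
qed




lemma of_bool_01: "(of_bool b :: real) = 0 \<or> of_bool b = 1" by (cases b) auto

lemma phi_new:
  assumes X: "Xr n m' D' i = Xr n m D i + of_bool bd" and Y: "Yr n m' i = Yr n m i + of_bool be"
    and w: "of_bool bd \<le> w" "0 \<le> w" and n: "0 < n" and p: "0 \<le> p"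
  shows "Phi n p i (m', D') \<le> Phi n p i (m, D) * (1 + (exp (1/10) - 1) * w
           - (1 - exp (- (1/10 * (2 * (9/10 * p) * Yr n m i / real n))))  * of_bool be)"
  unfolding Phi_def prod.case X Y
  by (rule phi_step[OF of_bool_01 of_bool_01 Yr_nonneg]) (use w n p in auto)

lemma int_drip:
  assumes "m u = m v" "0 \<le> p" "p \<le> 1"
  shows "(\<integral>\<^sup>+ s'. ennreal (FF n p i s') \<partial>inner n p i m D u v) =
    ennreal (FF n p i (m(v := Suc (m v)), if m v = i \<and> c_ge n m i < real n powr (-0.45) then D(v := True) else D)) * ennreal p
    + ennreal (FF n p i (m, D)) * ennreal (1 - p)"
  using assms by (simp add: inner_def)

lemma int_epi1:
  assumes "m v < m u"
  shows "(\<integral>\<^sup>+ s'. ennreal (FF n p i s') \<partial>inner n p i m D u v) =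
    ennreal (FF n p i (m(v := m u), if m v \<le> i \<and> i < m u \<and> D u then D(v := True) else D))"
  using assms by (simp add: inner_def)

lemma int_epi2:
  assumes "m u < m v"
  shows "(\<integral>\<^sup>+ s'. ennreal (FF n p i s') \<partial>inner n p i m D u v) =
    ennreal (FF n p i (m(u := m v), if m u \<le> i \<and> i < m v \<and> D v then D(u := True) else D))"
  using assms by (simp add: inner_def)

definition Wm :: "real \<Rightarrow> nat \<Rightarrow> (nat \<Rightarrow> nat) \<Rightarrow> (nat \<Rightarrow> bool) \<Rightarrow> nat \<Rightarrow> nat \<Rightarrow> real" where
  "Wm p i m D u v = p * (of_bool (m u = i) * of_bool (m v = i)) + of_bool (i < m u \<and> \<not> D u) + of_bool (i < m v \<and> \<not> D v)"

definition Cr :: "nat \<Rightarrow> (nat \<Rightarrow> nat) \<Rightarrow> nat \<Rightarrow> nat \<Rightarrow> real" where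
  "Cr i m u v = of_bool (i \<le> m u) * of_bool (m v < i) + of_bool (m u < i) * of_bool (i \<le> m v)"

definition Bt :: "nat \<Rightarrow> real \<Rightarrow> nat \<Rightarrow> (nat \<Rightarrow> nat) \<Rightarrow> real" where
  "Bt n p i m = 1 - exp (- (1/10 * (2 * (9/10 * p) * Yr n m i / real n)))"

lemma Bt_bounds: "0 < n \<Longrightarrow> 0 \<le> p \<Longrightarrow> 0 \<le> Bt n p i m \<and> Bt n p i m \<le> 1"
  unfolding Bt_def using Yr_nonneg[of n m i] by auto

lemma Wm_nonneg: "0 \<le> p \<Longrightarrow> 0 \<le> Wm p i m D u v" unfolding Wm_def by simp

lemma al_nonneg: "0 \<le> exp (1/10::real) - 1" by simp

lemma pair_bound:
  assumes n: "0 < n" and p: "0 < p" "p \<le> 1" and uv: "(u, v) \<in> agent_pairs n"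
    and c: "real n powr (-0.45) \<le> c_ge n m i" "c_ge n m i \<le> 1/10"
  shows "(\<integral>\<^sup>+ s'. ennreal (FF n p i s') \<partial>inner n p i m D u v)
     \<le> ennreal (Phi n p i (m, D) * (1 + (exp (1/10) - 1) * Wm p i m D u v - Bt n p i m * Cr i m u v))"
    (is "?L \<le> ennreal (?P * (1 + ?a * ?W - ?B * ?C))")
proof -
  have uvn: "u < n" "v < n" "u \<noteq> v" using pairsD[OF uv] by auto
  have Ph0: "0 < ?P" unfolding Phi_def by simp
  have al0: "0 \<le> ?a" by simp
  have B: "0 \<le> ?B" "?B \<le> 1" using Bt_bounds[of n p i m] n p by auto
  have W0: "0 \<le> ?W" using Wm_nonneg p by simp
  have FFs: "FF n p i (m, D) = ?P" using FF_eq_Phi[OF n c] .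
  have nc: "\<not> c_ge n m i < real n powr (-0.45)" using c by simp
  show ?thesis
  proof (cases "m u = m v")
    case True
    define sd where "sd = (m(v := Suc (m v)), if m v = i \<and> c_ge n m i < real n powr (-0.45) then D(v := True) else D)"
    have cr0: "?C = 0" unfolding Cr_def using True by auto
    define x where "x = (of_bool (m u = i \<and> m v = i) :: real)"
    have x0: "0 \<le> x" unfolding x_def by simp
    have "Phi n p i sd \<le> ?P * (1 + ?a * of_bool (m v = i \<and> \<not> c_ge n m i < real n powr (-0.45) \<and> \<not> D v)
           - ?B * of_bool (Suc (m v) = i))"
      unfolding sd_def Bt_def
      by (rule phi_new[OF drip_X[OF uvn(2)] drip_Y[OF uvn(2)]]) (use n p in auto)
    also have "\<dots> \<le> ?P * (1 + ?a * x)"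
    proof (rule mult_left_mono)
      have "(of_bool (m v = i \<and> \<not> c_ge n m i < real n powr (-0.45) \<and> \<not> D v) :: real) \<le> x"
        unfolding x_def using True by auto
      then have "?a * of_bool (m v = i \<and> \<not> c_ge n m i < real n powr (-0.45) \<and> \<not> D v) \<le> ?a * x"
        using al0 by (rule mult_left_mono)
      moreover have "0 \<le> ?B * (of_bool (Suc (m v) = i) :: real)" using B by simp
      ultimately show "1 + ?a * of_bool (m v = i \<and> \<not> c_ge n m i < real n powr (-0.45) \<and> \<not> D v)
           - ?B * of_bool (Suc (m v) = i) \<le> 1 + ?a * x" by linarith
    qed (use Ph0 in simp)
    finally have sdb: "FF n p i sd \<le> ?P * (1 + ?a * x)"
      using FF_le_Phi[OF n, of p i sd] p by linarith
    have FFsd0: "0 \<le> FF n p i sd" by (rule FF_nonneg)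
    have "?L = ennreal (FF n p i sd) * ennreal p + ennreal ?P * ennreal (1 - p)"
      using int_drip[where m=m and u=u and v=v and p=p and n=n and i=i and D=D] True p unfolding sd_def FFs by simp
    also have "\<dots> = ennreal (FF n p i sd * p + ?P * (1 - p))"
      using p FFsd0 Ph0 by (simp add: ennreal_mult ennreal_plus)
    also have "\<dots> \<le> ennreal (?P * (1 + ?a * ?W - ?B * ?C))"
    proof (rule ennreal_leI)
      have "FF n p i sd * p \<le> ?P * (1 + ?a * x) * p"
        using sdb p by (intro mult_right_mono) auto
      moreover have "?P * (1 + ?a * x) * p + ?P * (1 - p) = ?P * (1 + ?a * (p * x))"
        by (simp add: algebra_simps)
      moreover have "p * x \<le> ?W" unfolding Wm_def x_def by simp
      then have "?a * (p * x) \<le> ?a * ?W" using al0 by (rule mult_left_mono)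
      then have "?P * (1 + ?a * (p * x)) \<le> ?P * (1 + ?a * ?W)" using Ph0 by simp
      ultimately show "FF n p i sd * p + ?P * (1 - p) \<le> ?P * (1 + ?a * ?W - ?B * ?C)"
        unfolding cr0 by simp
    qed
    finally show ?thesis .
  next
    case False
    show ?thesis
    proof (cases "m v < m u")
      case True
      have cr: "?C = of_bool (m v < i \<and> i \<le> m u)" unfolding Cr_def using True by auto
      have "Phi n p i (m(v := m u), if m v \<le> i \<and> i < m u \<and> D u then D(v := True) else D)
          \<le> ?P * (1 + ?a * ?W - ?B * of_bool (m v < i \<and> i \<le> m u))"
        unfolding Bt_def
        by (rule phi_new[OF epi_X[OF uvn(2) True] epi_Y[OF uvn(2) True]]) (use n p W0 in \<open>auto simp: Wm_def\<close>)
      then have "FF n p i (m(v := m u), if m v \<le> i \<and> i < m u \<and> D u then D(v := True) else D)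
          \<le> ?P * (1 + ?a * ?W - ?B * ?C)"
        unfolding cr using FF_le_Phi[OF n, of p] p by (meson less_imp_le order_trans)
      then show ?thesis unfolding int_epi1[where m=m and u=u and v=v, OF True] by (rule ennreal_leI)
    next
      case False2: False
      then have lt: "m u < m v" using False by simp
      have cr: "?C = of_bool (m u < i \<and> i \<le> m v)" unfolding Cr_def using lt by auto
      have "Phi n p i (m(u := m v), if m u \<le> i \<and> i < m v \<and> D v then D(u := True) else D)
          \<le> ?P * (1 + ?a * ?W - ?B * of_bool (m u < i \<and> i \<le> m v))"
        unfolding Bt_def
        by (rule phi_new[OF epi_X[OF uvn(1) lt] epi_Y[OF uvn(1) lt]]) (use n p W0 in \<open>auto simp: Wm_def\<close>)
      then have "FF n p i (m(u := m v), if m u \<le> i \<and> i < m v \<and> D v then D(u := True) else D)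
          \<le> ?P * (1 + ?a * ?W - ?B * ?C)"
        unfolding cr using FF_le_Phi[OF n, of p] p by (meson less_imp_le order_trans)
      then show ?thesis unfolding int_epi2[where m=m and u=u and v=v, OF lt] by (rule ennreal_leI)
    qed
  qed
qed




lemma pairs_sub: "agent_pairs n \<subseteq> {..<n} \<times> {..<n}" unfolding agent_pairs_def by auto
lemma pairs_fin: "finite (agent_pairs n)" by (rule finite_subset[OF pairs_sub]) auto
lemma pairs_ne: "2 \<le> n \<Longrightarrow> agent_pairs n \<noteq> {}"
proof -
  assume "2 \<le> n"
  then have "(0, 1) \<in> agent_pairs n" by (simp add: agent_pairs_def)
  then show ?thesis by blast
qed

lemma sum_square:
  fixes f g :: "nat \<Rightarrow> real"
  shows "(\<Sum>x\<in>{..<n} \<times> {..<n}. f (fst x) * g (snd x)) = (\<Sum>u<n. f u) * (\<Sum>v<n. g v)"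
  by (simp add: sum_product sum.cartesian_product split_def)

lemma sum_pairs_le:
  fixes f g :: "nat \<Rightarrow> real"
  assumes "\<And>u. 0 \<le> f u" "\<And>v. 0 \<le> g v"
  shows "(\<Sum>x\<in>agent_pairs n. f (fst x) * g (snd x)) \<le> (\<Sum>u<n. f u) * (\<Sum>v<n. g v)"
proof -
  have "(\<Sum>x\<in>agent_pairs n. f (fst x) * g (snd x)) \<le> (\<Sum>x\<in>{..<n} \<times> {..<n}. f (fst x) * g (snd x))"
    by (rule sum_mono2) (use pairs_sub assms in auto)
  then show ?thesis unfolding sum_square .
qed

lemma sum_pairs_eq:
  fixes f g :: "nat \<Rightarrow> real"
  assumes "\<And>u. f u * g u = 0"
  shows "(\<Sum>x\<in>agent_pairs n. f (fst x) * g (snd x)) = (\<Sum>u<n. f u) * (\<Sum>v<n. g v)"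
proof -
  have "(\<Sum>x\<in>agent_pairs n. f (fst x) * g (snd x)) = (\<Sum>x\<in>{..<n} \<times> {..<n}. f (fst x) * g (snd x))"
  proof (rule sum.mono_neutral_left)
    show "\<forall>x\<in>{..<n} \<times> {..<n} - agent_pairs n. f (fst x) * g (snd x) = 0"
    proof
      fix x assume "x \<in> {..<n} \<times> {..<n} - agent_pairs n"
      then have "fst x = snd x" by (auto simp: agent_pairs_def)
      then show "f (fst x) * g (snd x) = 0" using assms[of "fst x"] by simp
    qed
  qed (use pairs_sub in auto)
  then show ?thesis unfolding sum_square .
qed

lemma sum_bool_card: fixes n :: nat shows "(\<Sum>u<n. (of_bool (Q u) :: real)) = real (card {a. a < n \<and> Q a})"
proof -
  have e: "{..<n} \<inter> {x. Q x} = {a. a < n \<and> Q a}" by auto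
  have "(\<Sum>u<n. (of_bool (Q u) :: real)) = of_nat (card ({..<n} \<inter> {x. Q x}))" by (rule sum_of_bool_eq; simp)
  then show ?thesis unfolding e by simp
qed

lemma sum_Y: "(\<Sum>u<n. (of_bool (i \<le> m u) :: real)) = Yr n m i"
  unfolding Yr_def by (rule sum_bool_card)

lemma sum_Yc: "(\<Sum>u<n. (of_bool (m u < i) :: real)) = real n - Yr n m i"
proof -
  have "(\<Sum>u<n. (of_bool (m u < i) :: real)) = (\<Sum>u<n. 1 - of_bool (i \<le> m u))"
    by (rule sum.cong) auto
  also have "\<dots> = real n - Yr n m i" unfolding sum_subtractf sum_Y by simp
  finally show ?thesis .
qed

lemma sum_X: "(\<Sum>u<n. (of_bool (i < m u \<and> \<not> D u) :: real)) = Xr n m D i"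
  unfolding Xr_def by (rule sum_bool_card)

lemma sum_W:
  assumes "0 \<le> p"
  shows "(\<Sum>x\<in>agent_pairs n. Wm p i m D (fst x) (snd x)) \<le> p * (Yr n m i)^2 + 2 * Xr n m D i * real n"
proof -
  have s1: "(\<Sum>x\<in>agent_pairs n. (of_bool (m (fst x) = i) * of_bool (m (snd x) = i) :: real)) \<le> (Yr n m i)^2"
  proof -
    have "(\<Sum>x\<in>agent_pairs n. (of_bool (m (fst x) = i) * of_bool (m (snd x) = i) :: real))
       \<le> (\<Sum>x\<in>agent_pairs n. (of_bool (i \<le> m (fst x)) * of_bool (i \<le> m (snd x)) :: real))"
      by (rule sum_mono) auto
    also have "\<dots> \<le> (Yr n m i)^2"
      using sum_pairs_le[of "\<lambda>u. of_bool (i \<le> m u)" "\<lambda>u. of_bool (i \<le> m u)" n] unfolding sum_Y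
      by (simp add: power2_eq_square)
    finally show ?thesis .
  qed
  have s2: "(\<Sum>x\<in>agent_pairs n. (of_bool (i < m (fst x) \<and> \<not> D (fst x)) :: real)) \<le> Xr n m D i * real n"
    using sum_pairs_le[of "\<lambda>u. of_bool (i < m u \<and> \<not> D u)" "\<lambda>u. 1" n] unfolding sum_X by simp
  have s3: "(\<Sum>x\<in>agent_pairs n. (of_bool (i < m (snd x) \<and> \<not> D (snd x)) :: real)) \<le> Xr n m D i * real n"
    using sum_pairs_le[of "\<lambda>u. 1" "\<lambda>u. of_bool (i < m u \<and> \<not> D u)" n] unfolding sum_X by (simp add: mult.commute)
  have "(\<Sum>x\<in>agent_pairs n. Wm p i m D (fst x) (snd x))
     = p * (\<Sum>x\<in>agent_pairs n. (of_bool (m (fst x) = i) * of_bool (m (snd x) = i) :: real))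
       + (\<Sum>x\<in>agent_pairs n. (of_bool (i < m (fst x) \<and> \<not> D (fst x)) :: real))
       + (\<Sum>x\<in>agent_pairs n. (of_bool (i < m (snd x) \<and> \<not> D (snd x)) :: real))"
    unfolding Wm_def sum.distrib sum_distrib_left by simp
  also have "\<dots> \<le> p * (Yr n m i)^2 + Xr n m D i * real n + Xr n m D i * real n"
    using s1 s2 s3 assms by (intro add_mono mult_left_mono) auto
  finally show ?thesis by (simp add: algebra_simps)
qed

lemma sum_C:
  "(\<Sum>x\<in>agent_pairs n. Cr i m (fst x) (snd x)) = 2 * Yr n m i * (real n - Yr n m i)"
proof -
  have a: "(\<Sum>x\<in>agent_pairs n. (of_bool (i \<le> m (fst x)) * of_bool (m (snd x) < i) :: real)) = Yr n m i * (real n - Yr n m i)"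
    using sum_pairs_eq[of "\<lambda>u. of_bool (i \<le> m u)" "\<lambda>u. of_bool (m u < i)" n] unfolding sum_Y sum_Yc by simp
  have b: "(\<Sum>x\<in>agent_pairs n. (of_bool (m (fst x) < i) * of_bool (i \<le> m (snd x)) :: real)) = (real n - Yr n m i) * Yr n m i"
    using sum_pairs_eq[of "\<lambda>u. of_bool (m u < i)" "\<lambda>u. of_bool (i \<le> m u)" n] unfolding sum_Y sum_Yc by simp
  show ?thesis unfolding Cr_def sum.distrib a b by simp
qed




lemma pmf_nn_le:
  assumes "\<And>x. x \<in> set_pmf M \<Longrightarrow> f x \<le> c"
  shows "(\<integral>\<^sup>+x. ennreal (f x) \<partial>measure_pmf M) \<le> ennreal c"
proof -
  have "(\<integral>\<^sup>+x. ennreal (f x) \<partial>measure_pmf M) \<le> (\<integral>\<^sup>+x. ennreal c \<partial>measure_pmf M)"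
    by (rule nn_integral_mono_AE) (use assms in \<open>auto simp: AE_measure_pmf_iff intro: ennreal_leI\<close>)
  also have "\<dots> = ennreal c" by (simp add: measure_pmf.emeasure_space_1)
  finally show ?thesis .
qed

lemma Cr_le1: "Cr i m u v \<le> 1" unfolding Cr_def by auto

lemma one_step_B:
  assumes n2: "2 \<le> n" and p: "0 < p" "p \<le> 1"
    and c: "real n powr (-0.45) \<le> c_ge n m i" "c_ge n m i \<le> 1/10"
    and X: "Xr n m D i \<le> (9/10 * p) * (Yr n m i)^2 / real n"
  shows "(\<integral>\<^sup>+ s'. ennreal (FF n p i s') \<partial>clock_step n p i (m, D)) \<le> ennreal (FF n p i (m, D))"
proof -
  define P where "P = agent_pairs n"
  define Ph where "Ph = Phi n p i (m, D)"
  define al :: real where "al = exp (1/10) - 1"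
  define R where "R = (\<lambda>x. Ph * (1 + al * Wm p i m D (fst x) (snd x) - Bt n p i m * Cr i m (fst x) (snd x)))"
  have n: "0 < n" using n2 by simp
  have ne: "P \<noteq> {}" unfolding P_def using pairs_ne[OF n2] .
  have fin: "finite P" unfolding P_def by (rule pairs_fin)
  have cP: "0 < card P" using ne fin by (simp add: card_gt_0_iff)
  have Ph0: "0 < Ph" unfolding Ph_def Phi_def by simp
  have al0: "0 \<le> al" unfolding al_def by simp
  have B: "0 \<le> Bt n p i m" "Bt n p i m \<le> 1" using Bt_bounds[of n p i m] n p by auto
  have R0: "0 \<le> R x" for x
  proof -
    have "Bt n p i m * Cr i m (fst x) (snd x) \<le> 1 * 1"
      using B Cr_le1[of i m "fst x" "snd x"] by (intro mult_mono) (auto simp: Cr_def)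
    moreover have "0 \<le> al * Wm p i m D (fst x) (snd x)" using al0 Wm_nonneg[of p] p by simp
    ultimately show ?thesis unfolding R_def using Ph0 by simp
  qed
  have "(\<integral>\<^sup>+ s'. ennreal (FF n p i s') \<partial>clock_step n p i (m, D))
      = (\<integral>\<^sup>+x. (\<integral>\<^sup>+ s'. ennreal (FF n p i s') \<partial>(case x of (u, v) \<Rightarrow> inner n p i m D u v)) \<partial>pmf_of_set P)"
    unfolding step_eq P_def nn_integral_bind_pmf by (simp add: split_def)
  also have "\<dots> = (\<Sum>x\<in>P. (\<integral>\<^sup>+ s'. ennreal (FF n p i s') \<partial>(case x of (u, v) \<Rightarrow> inner n p i m D u v))) / of_nat (card P)"
    by (rule nn_integral_pmf_of_set[OF ne fin])
  also have "\<dots> \<le> (\<Sum>x\<in>P. ennreal (R x)) / of_nat (card P)"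
  proof (intro divide_right_mono_ennreal sum_mono)
    fix x assume "x \<in> P"
    then obtain u v where x: "x = (u, v)" "(u, v) \<in> agent_pairs n" unfolding P_def by (cases x) auto
    show "(\<integral>\<^sup>+ s'. ennreal (FF n p i s') \<partial>(case x of (u, v) \<Rightarrow> inner n p i m D u v)) \<le> ennreal (R x)"
      unfolding x(1) R_def Ph_def al_def using pair_bound[OF n p x(2) c] by simp
  qed
  also have "\<dots> = ennreal (sum R P) / ennreal (real (card P))"
    using R0 by (simp add: ennreal_of_nat_eq_real_of_nat)
  also have "\<dots> = ennreal (sum R P / real (card P))"
    using R0 cP by (intro divide_ennreal) (auto intro: sum_nonneg)
  also have "\<dots> \<le> ennreal (FF n p i (m, D))"
  proof (rule ennreal_leI)
    define SW where "SW = (\<Sum>x\<in>P. Wm p i m D (fst x) (snd x))"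
    define SC where "SC = (\<Sum>x\<in>P. Cr i m (fst x) (snd x))"
    have "sum R P = Ph * (\<Sum>x\<in>P. (1 + al * Wm p i m D (fst x) (snd x) - Bt n p i m * Cr i m (fst x) (snd x)))"
      unfolding R_def by (simp add: sum_distrib_left)
    also have "(\<Sum>x\<in>P. (1 + al * Wm p i m D (fst x) (snd x) - Bt n p i m * Cr i m (fst x) (snd x)))
        = real (card P) + al * SW - Bt n p i m * SC"
      unfolding SW_def SC_def by (simp add: sum.distrib sum_subtractf sum_distrib_left)
    finally have sR: "sum R P = Ph * (real (card P) + al * SW - Bt n p i m * SC)" .
    have Yle: "Yr n m i \<le> real n / 10" using c(2) n by (simp add: c_ge_Yr field_simps)
    have "al * SW \<le> Bt n p i m * SC"
      unfolding al_def Bt_def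
      by (rule key_ineq[OF p _ Yr_nonneg Yle X]) (use n sum_W[OF less_imp_le[OF p(1)], where n=n and i=i and m=m and D=D] sum_C[where n=n and i=i and m=m] in
          \<open>auto simp: SW_def SC_def P_def\<close>)
    then have "sum R P \<le> Ph * real (card P)" unfolding sR using Ph0 by (intro mult_left_mono) auto
    then have "sum R P / real (card P) \<le> Ph" using cP by (simp add: divide_le_eq)
    then show "sum R P / real (card P) \<le> FF n p i (m, D)" unfolding Ph_def using FF_eq_Phi[OF n c] by simp
  qed
  finally show ?thesis .
qed




lemma c_mono: "Yr n m i \<le> Yr n m' i \<Longrightarrow> c_ge n m i \<le> c_ge n m' i"
  unfolding c_ge_Yr by (rule divide_right_mono) auto

lemma one_step:
  assumes n2: "2 \<le> n" and p: "0 < p" "p \<le> 1"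
    and I: "Inv n i (m, D)" and Z: "\<not> Zpos n p i (m, D)"
  shows "(\<integral>\<^sup>+ s'. ennreal (FF n p i s') \<partial>clock_step n p i (m, D)) \<le> ennreal (FF n p i (m, D))"
proof -
  have n: "0 < n" using n2 by simp
  define Y0 where "Y0 = real n powr (-0.45) * real n"
  have Y00: "0 \<le> Y0" unfolding Y0_def by simp
  have sup: "\<exists>u v. (u, v) \<in> agent_pairs n \<and> (m', D') \<in> set_pmf (inner n p i m D u v)"
    if "(m', D') \<in> set_pmf (clock_step n p i (m, D))" for m' D'
    using inner_support_step[OF that n2] by metis
  consider (C) "1/10 < c_ge n m i" | (A) "c_ge n m i \<le> 1/10" "c_ge n m i < real n powr (-0.45)"
    | (B) "c_ge n m i \<le> 1/10" "real n powr (-0.45) \<le> c_ge n m i" by linarith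
  then show ?thesis
  proof cases
    case C
    have "FF n p i s' \<le> 0" if s'in: "s' \<in> set_pmf (clock_step n p i (m, D))" for s'
    proof -
      obtain m' D' where s': "s' = (m', D')" by fastforce
      obtain u v where "(u, v) \<in> agent_pairs n" "(m', D') \<in> set_pmf (inner n p i m D u v)"
        using sup s'in unfolding s' by blast
      then have "Yr n m i \<le> Yr n m' i" by (rule outcome_facts(1))
      then have "1/10 < c_ge n m' i" using c_mono C by (meson less_le_trans)
      then show ?thesis unfolding s' FF_def by simp
    qed
    then have "(\<integral>\<^sup>+ s'. ennreal (FF n p i s') \<partial>clock_step n p i (m, D)) \<le> ennreal 0"
      by (rule pmf_nn_le)
    then show ?thesis by simp
  next
    case A
    have X0: "Xr n m D i = 0" using I A unfolding Inv_def by simp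
    have "Yr n m i \<le> Y0" using A(2) n unfolding Y0_def c_ge_Yr by (simp add: field_simps)
    then have mx: "max (Yr n m i) Y0 = Y0" by simp
    have FFs: "FF n p i (m, D) = exp (1/10 * (0 - (9/10 * p) * Y0^2 / real n))"
      unfolding FF_def prod.case X0 Y0_def[symmetric] mx using A(1) by simp
    have "FF n p i s' \<le> exp (1/10 * (0 - (9/10 * p) * Y0^2 / real n))"
      if s'in: "s' \<in> set_pmf (clock_step n p i (m, D))" for s'
    proof -
      obtain m' D' where s': "s' = (m', D')" by fastforce
      obtain u v where uv: "(u, v) \<in> agent_pairs n" "(m', D') \<in> set_pmf (inner n p i m D u v)"
        using sup s'in unfolding s' by blast
      have X0': "Xr n m' D' i = 0" by (rule outcome_facts(2)[OF uv A(2) X0])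
      have "Y0^2 \<le> (max (Yr n m' i) Y0)^2" using Y00 by (intro power_mono) auto
      then have "(9/10 * p) * Y0^2 / real n \<le> (9/10 * p) * (max (Yr n m' i) Y0)^2 / real n"
        using p n by (intro divide_right_mono mult_left_mono) auto
      then have "exp (1/10 * (0 - (9/10 * p) * (max (Yr n m' i) Y0)^2 / real n))
          \<le> exp (1/10 * (0 - (9/10 * p) * Y0^2 / real n))" by (rule exp_sub_mono)
      then show ?thesis unfolding s' FF_def prod.case X0' Y0_def[symmetric] by auto
    qed
    then show ?thesis unfolding FFs by (rule pmf_nn_le)
  next
    case B
    have "Xr n m D i \<le> (9/10 * p) * (Yr n m i)^2 / real n" using Z B unfolding Zpos_def by auto
    then show ?thesis by (rule one_step_B[OF n2 p B(2) B(1)])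
  qed
qed

lemma inv_step:
  assumes n2: "2 \<le> n" and I: "Inv n i (m, D)" and s: "s' \<in> set_pmf (clock_step n p i (m, D))"
  shows "Inv n i s'"
proof -
  obtain m' D' where s': "s' = (m', D')" by fastforce
  obtain u v where uv: "(u, v) \<in> agent_pairs n" "(m', D') \<in> set_pmf (inner n p i m D u v)"
    using inner_support_step[OF s[unfolded s'] n2] by metis
  have "Xr n m' D' i = 0" if c': "c_ge n m' i < real n powr (-0.45)"
  proof -
    have "c_ge n m i \<le> c_ge n m' i" by (rule c_mono[OF outcome_facts(1)[OF uv]])
    then have c: "c_ge n m i < real n powr (-0.45)" using c' by linarith
    then have "Xr n m D i = 0" using I unfolding Inv_def by simp
    then show ?thesis by (rule outcome_facts(2)[OF uv c])
  qed
  then show ?thesis unfolding s' Inv_def by simp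
qed

lemma Zpos_FF: assumes "0 < n" "Zpos n p i s" shows "1 \<le> FF n p i s"
proof -
  obtain m D where s: "s = (m, D)" by fastforce
  have c: "real n powr (-0.45) \<le> c_ge n m i" "c_ge n m i \<le> 1/10"
    and X: "(9/10 * p) * (Yr n m i)^2 / real n < Xr n m D i" using assms(2) unfolding s Zpos_def by auto
  have "FF n p i s = Phi n p i (m, D)" unfolding s by (rule FF_eq_Phi[OF assms(1) c])
  moreover have "1 \<le> Phi n p i (m, D)" unfolding Phi_def prod.case using X by simp
  ultimately show ?thesis by simp
qed

definition G :: "nat \<Rightarrow> real \<Rightarrow> nat \<Rightarrow> config list \<Rightarrow> real" where
  "G n p i xs = (if \<exists>x\<in>set xs. Zpos n p i x then 1 else FF n p i (last xs))"

lemma G_nonneg: "0 \<le> G n p i xs" unfolding G_def using FF_nonneg by simp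

lemma Inv_init: "Inv n i clock_init" unfolding Inv_def clock_init_def Xr_def by simp

lemma Zpos_init: "0 \<le> p \<Longrightarrow> \<not> Zpos n p i clock_init" unfolding Zpos_def clock_init_def Xr_def
  by (auto simp: not_less)

lemma run_facts:
  assumes n2: "2 \<le> n" and p: "0 < p" "p \<le> 1"
  shows "(\<forall>xs\<in>set_pmf (clock_run n p i k). xs \<noteq> [] \<and> Inv n i (last xs)) \<and>
         (\<integral>\<^sup>+ xs. ennreal (G n p i xs) \<partial>clock_run n p i k) \<le> ennreal (FF n p i clock_init)"
proof (induction k)
  case 0
  have "G n p i [clock_init] = FF n p i clock_init" unfolding G_def using Zpos_init[of p n i] p by simp
  then show ?case using Inv_init by simp
next
  case (Suc k)
  have n: "0 < n" using n2 by simp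
  have S: "xs \<noteq> [] \<and> Inv n i (last xs)" if "xs \<in> set_pmf (clock_run n p i k)" for xs
    using Suc.IH that by blast
  have part1: "\<forall>xs\<in>set_pmf (clock_run n p i (Suc k)). xs \<noteq> [] \<and> Inv n i (last xs)"
  proof
    fix ys assume "ys \<in> set_pmf (clock_run n p i (Suc k))"
    then obtain xs s' where xs: "xs \<in> set_pmf (clock_run n p i k)" and s': "s' \<in> set_pmf (clock_step n p i (last xs))"
      and ys: "ys = xs @ [s']" by auto
    obtain m D where l: "last xs = (m, D)" by fastforce
    have "Inv n i s'" using inv_step[OF n2 _ s'[unfolded l]] S[OF xs] l by simp
    then show "ys \<noteq> [] \<and> Inv n i (last ys)" unfolding ys by simp
  qed
  have inner: "(\<integral>\<^sup>+ s'. ennreal (G n p i (xs @ [s'])) \<partial>clock_step n p i (last xs)) \<le> ennreal (G n p i xs)"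
    if xs: "xs \<in> set_pmf (clock_run n p i k)" for xs
  proof (cases "\<exists>x\<in>set xs. Zpos n p i x")
    case True
    have "(\<integral>\<^sup>+ s'. ennreal (G n p i (xs @ [s'])) \<partial>clock_step n p i (last xs)) \<le> ennreal 1"
      by (rule pmf_nn_le) (use True in \<open>auto simp: G_def\<close>)
    then show ?thesis using True by (simp add: G_def)
  next
    case False
    obtain m D where l: "last xs = (m, D)" by fastforce
    have ne: "xs \<noteq> []" and I: "Inv n i (m, D)" using S[OF xs] l by auto
    have Z: "\<not> Zpos n p i (m, D)" using False l ne last_in_set[OF ne] by metis
    have "(\<integral>\<^sup>+ s'. ennreal (G n p i (xs @ [s'])) \<partial>clock_step n p i (last xs))
        \<le> (\<integral>\<^sup>+ s'. ennreal (FF n p i s') \<partial>clock_step n p i (last xs))"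
    proof (rule nn_integral_mono)
      fix s'
      show "ennreal (G n p i (xs @ [s'])) \<le> ennreal (FF n p i s')"
        using False Zpos_FF[OF n, of p i s'] by (intro ennreal_leI) (auto simp: G_def)
    qed
    also have "\<dots> \<le> ennreal (FF n p i (m, D))" unfolding l by (rule one_step[OF n2 p I Z])
    also have "\<dots> = ennreal (G n p i xs)" using False l by (simp add: G_def)
    finally show ?thesis .
  qed
  have "(\<integral>\<^sup>+ ys. ennreal (G n p i ys) \<partial>clock_run n p i (Suc k))
      = (\<integral>\<^sup>+ xs. (\<integral>\<^sup>+ s'. ennreal (G n p i (xs @ [s'])) \<partial>clock_step n p i (last xs)) \<partial>clock_run n p i k)"
    by simp
  also have "\<dots> \<le> (\<integral>\<^sup>+ xs. ennreal (G n p i xs) \<partial>clock_run n p i k)"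
    by (rule nn_integral_mono_AE) (use inner in \<open>auto simp: AE_measure_pmf_iff\<close>)
  also have "\<dots> \<le> ennreal (FF n p i clock_init)" using Suc.IH by blast
  finally show ?case using part1 by blast
qed




lemma bad_Zpos:
  assumes n: "0 < n" and bad: "clock_bad n p i s"
  shows "Zpos n p i s"
proof -
  obtain m D where s: "s = (m, D)" by fastforce
  have c: "real n powr (-0.45) \<le> c_ge n m i" "c_ge n m i \<le> 1/10"
    and nb: "0.9 * p * (c_ge n m i)^2 + d_frac n D < c_ge n m (Suc i)"
    using bad unfolding s clock_bad_def by auto
  have sub: "{a. a < n \<and> Suc i \<le> m a} \<subseteq> {a. a < n \<and> i < m a \<and> \<not> D a} \<union> {a. a < n \<and> D a}" by auto
  have "card {a. a < n \<and> Suc i \<le> m a} \<le> card ({a. a < n \<and> i < m a \<and> \<not> D a} \<union> {a. a < n \<and> D a})"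
    by (rule card_mono[OF _ sub]) simp
  also have "\<dots> \<le> card {a. a < n \<and> i < m a \<and> \<not> D a} + card {a. a < n \<and> D a}" by (rule card_Un_le)
  finally have "real (card {a. a < n \<and> Suc i \<le> m a}) \<le> Xr n m D i + real (card {a. a < n \<and> D a})"
    unfolding Xr_def by linarith
  then have "real (card {a. a < n \<and> Suc i \<le> m a}) / real n \<le> (Xr n m D i + real (card {a. a < n \<and> D a})) / real n"
    by (rule divide_right_mono) simp
  also have "\<dots> = Xr n m D i / real n + real (card {a. a < n \<and> D a}) / real n" by (rule add_divide_distrib)
  finally have "c_ge n m (Suc i) \<le> Xr n m D i / real n + d_frac n D"
    unfolding c_ge_def d_frac_def .
  with nb have "0.9 * p * (c_ge n m i)^2 < Xr n m D i / real n" by linarith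
  then have "0.9 * p * (Yr n m i / real n)^2 * real n < Xr n m D i"
    unfolding c_ge_Yr using n by (simp add: field_simps)
  moreover have "0.9 * p * (Yr n m i / real n)^2 * real n = (9/10 * p) * (Yr n m i)^2 / real n"
    using n by (simp add: power2_eq_square field_simps)
  ultimately have "(9/10 * p) * (Yr n m i)^2 / real n < Xr n m D i" by (simp only:)
  then show ?thesis unfolding s Zpos_def prod.case using c by blast
qed

lemma Y0_sq: "0 < n \<Longrightarrow> (real n powr (-0.45) * real n)^2 / real n = real n powr (1/10)"
proof -
  assume n: "0 < n"
  have x0: "real n \<noteq> 0" using n by simp
  have a: "real n * real n powr (-0.45) = real n powr (1 + -0.45)" by (rule powr_mult_base) simp
  have b: "(1::real) + -0.45 = 11/20" by simp
  have c1: "real n powr (-0.45) * real n = real n powr (11/20)" using a unfolding b by (simp only: mult.commute)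
  have c2: "(real n powr (11/20))^2 = real n powr (of_nat 2 * (11/20))" by (rule powr_power[OF x0])
  have c3: "(of_nat 2 * (11/20) :: real) = 11/10" by simp
  have c4: "real n powr (11/10) / real n powr 1 = real n powr (11/10 - 1)" by (rule powr_diff[symmetric])
  have c5: "real n powr 1 = real n" using n by simp
  have c6: "(11/10 - 1 :: real) = 1/10" by simp
  show ?thesis unfolding c1 c2 c3 using c4 unfolding c5 c6 .
qed

lemma FF_init_le:
  assumes n: "0 < n" and p: "0 \<le> p"
  shows "FF n p i clock_init \<le> exp (- (9/100 * p * real n powr (1/10)))"
proof -
  define Y0 where "Y0 = real n powr (-0.45) * real n"
  have X0: "Xr n (\<lambda>_. 0) (\<lambda>_. False) i = 0" unfolding Xr_def by simp
  have "Y0^2 \<le> (max (Yr n (\<lambda>_. 0) i) Y0)^2" unfolding Y0_def by (intro power_mono) auto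
  then have "(9/10 * p) * Y0^2 / real n \<le> (9/10 * p) * (max (Yr n (\<lambda>_. 0) i) Y0)^2 / real n"
    using p n by (intro divide_right_mono mult_left_mono) auto
  then have "exp (1/10 * (0 - (9/10 * p) * (max (Yr n (\<lambda>_. 0) i) Y0)^2 / real n))
      \<le> exp (1/10 * (0 - (9/10 * p) * Y0^2 / real n))" by (rule exp_sub_mono)
  also have "(9/10 * p) * Y0^2 / real n = 9/10 * p * real n powr (1/10)"
  proof -
    have "(9/10 * p) * Y0^2 / real n = (9/10 * p) * (Y0^2 / real n)" by (rule times_divide_eq_right[symmetric])
    then show ?thesis unfolding Y0_def Y0_sq[OF n] .
  qed
  finally have e: "exp (1/10 * (0 - (9/10 * p) * (max (Yr n (\<lambda>_. 0) i) Y0)^2 / real n))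
      \<le> exp (- (9/100 * p * real n powr (1/10)))" by simp
  show ?thesis unfolding FF_def clock_init_def prod.case X0 Y0_def[symmetric] using e by simp
qed

lemma prob_bound:
  assumes n2: "2 \<le> n" and p: "0 < p" "p \<le> 1"
  shows "measure_pmf.prob (clock_run n p i k) {xs. \<exists>t < length xs. clock_bad n p i (xs ! t)}
         \<le> FF n p i clock_init"
proof -
  have n: "0 < n" using n2 by simp
  let ?A = "{xs. \<exists>t < length xs. clock_bad n p i (xs ! t)}"
  have "emeasure (measure_pmf (clock_run n p i k)) ?A = (\<integral>\<^sup>+ xs. indicator ?A xs \<partial>clock_run n p i k)"
    by simp
  also have "\<dots> \<le> (\<integral>\<^sup>+ xs. ennreal (G n p i xs) \<partial>clock_run n p i k)"
  proof (rule nn_integral_mono)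
    fix xs
    show "indicator ?A xs \<le> ennreal (G n p i xs)"
    proof (cases "xs \<in> ?A")
      case True
      then obtain t where "t < length xs" "clock_bad n p i (xs ! t)" by auto
      then have "\<exists>x\<in>set xs. Zpos n p i x" using bad_Zpos[OF n] nth_mem by blast
      then show ?thesis using True by (simp add: G_def)
    qed simp
  qed
  also have "\<dots> \<le> ennreal (FF n p i clock_init)" using run_facts[OF n2 p] by blast
  finally have "ennreal (measure_pmf.prob (clock_run n p i k) ?A) \<le> ennreal (FF n p i clock_init)"
    by (simp add: measure_pmf.emeasure_eq_measure)
  then show ?thesis using FF_nonneg by (simp add: ennreal_le_iff)
qed

lemma asymp:
  fixes q C :: real assumes q: "q > 0" and C: "C > 0"
  shows "eventually (\<lambda>n::nat. exp (-(q * real n powr (1/10))) \<le> real n powr (-C)) sequentially"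
proof (rule eventually_sequentiallyI)
  fix n :: nat
  assume N: "nat \<lceil>(20 * C / q) powr 20\<rceil> + 1 \<le> n"
  have n: "0 < real n" using N by simp
  have "(20 * C / q) powr 20 \<le> real n" using N
    by (smt (verit, ccfv_SIG) of_nat_1 of_nat_add of_nat_le_iff of_nat_nat real_nat_ceiling_ge)
  then have "((20 * C / q) powr 20) powr (1/20) \<le> real n powr (1/20)"
    by (intro powr_mono2) auto
  moreover have "((20 * C / q) powr 20) powr (1/20) = 20 * C / q"
    using q C by (subst powr_powr) simp
  ultimately have r: "20 * C / q \<le> real n powr (1/20)" by simp
  define r where "r = real n powr (1/20)"
  have r0: "0 < r" unfolding r_def using n by simp
  have sq: "real n powr (1/10) = r * r" unfolding r_def by (simp flip: powr_add)
  have "ln (real n) = 20 * ln r" unfolding r_def using n by simp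
  also have "\<dots> \<le> 20 * r" using ln_le_minus_one[OF r0] by simp
  finally have l: "C * ln (real n) \<le> C * (20 * r)" using C by (intro mult_left_mono) auto
  have "C * (20 * r) = q * ((20 * C / q) * r)" using q by (simp add: field_simps)
  also have "\<dots> \<le> q * (r * r)" using q r0 r unfolding r_def[symmetric] by (intro mult_left_mono mult_right_mono) auto
  finally have "C * ln (real n) \<le> q * real n powr (1/10)" using l sq by simp
  then have "exp (-(q * real n powr (1/10))) \<le> exp (-C * ln (real n))" by simp
  also have "\<dots> = real n powr (-C)" using n by (simp add: powr_def)
  finally show "exp (-(q * real n powr (1/10))) \<le> real n powr (-C)" .
qed


theorem mainTheorem1:
  fixes p :: real
  assumes "0 < p" and "p \<le> 1"
  shows "\<forall>K::nat. \<forall>C::real. C > 0 \<longrightarrow>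
           (\<forall>\<^sub>F n in sequentially. \<forall>i::nat.
              measure_pmf.prob (clock_run n p i (n ^ K))
                {xs. \<exists>t < length xs. clock_bad n p i (xs ! t)} \<le> real n powr (- C))"
proof (intro allI impI)
  fix K :: nat and C :: real assume C: "C > 0"
  have q: "9/100 * p > 0" using assms by simp
  have ev: "eventually (\<lambda>n::nat. exp (-(9/100 * p * real n powr (1/10))) \<le> real n powr (-C) \<and> 2 \<le> n) sequentially"
    using asymp[OF q C] eventually_ge_at_top[of 2] by (rule eventually_conj)
  show "\<forall>\<^sub>F n in sequentially. \<forall>i::nat.
              measure_pmf.prob (clock_run n p i (n ^ K))
                {xs. \<exists>t < length xs. clock_bad n p i (xs ! t)} \<le> real n powr (- C)"
    using ev
  proof (rule eventually_mono)
    fix n :: nat assume h: "exp (-(9/100 * p * real n powr (1/10))) \<le> real n powr (-C) \<and> 2 \<le> n"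
    show "\<forall>i. measure_pmf.prob (clock_run n p i (n ^ K))
                {xs. \<exists>t < length xs. clock_bad n p i (xs ! t)} \<le> real n powr (- C)"
    proof
      fix i
      have "measure_pmf.prob (clock_run n p i (n ^ K)) {xs. \<exists>t < length xs. clock_bad n p i (xs ! t)}
          \<le> FF n p i clock_init" using prob_bound[OF conjunct2[OF h] assms] .
      also have "\<dots> \<le> exp (-(9/100 * p * real n powr (1/10)))"
        using FF_init_le[of n p i] h assms by simp
      also have "\<dots> \<le> real n powr (-C)" using h by simp
      finally show "measure_pmf.prob (clock_run n p i (n ^ K))
                {xs. \<exists>t < length xs. clock_bad n p i (xs ! t)} \<le> real n powr (- C)" .
    qed
  qed
qed


end
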